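(* $GR(4,K_4,3) = 10$.
   Context: For positive integers $r,s,t$, $GR(r,K_s,t)$ denotes the minimum integer $n$ such that every coloring of the edges of $K_n$ with $r$ colors contains a copy of $K_s$ whose edges use at most $t$ distinct colors. *)

theory Defs
  imports Main
begin

definition edges_of :: "nat set \<Rightarrow> nat set set" where
  "edges_of V = {e. e \<subseteq> V \<and> card e = 2}"

definition edge_colouring :: "nat \<Rightarrow> nat \<Rightarrow> (nat set \<Rightarrow> nat) \<Rightarrow> bool" where
  "edge_colouring r n c \<longleftrightarrow> (\<forall>e \<in> edges_of {..<n}. c e < r)"

definition GR_prop :: "nat \<Rightarrow> nat \<Rightarrow> nat \<Rightarrow> nat \<Rightarrow> bool" where
  "GR_prop r s t n \<longleftrightarrow>
     (\<forall>c. edge_colouring r n c \<longrightarrow>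
        (\<exists>S. S \<subseteq> {..<n} \<and> card S = s \<and> card (c ` edges_of S) \<le> t))"

definition GR :: "nat \<Rightarrow> nat \<Rightarrow> nat \<Rightarrow> nat" where
  "GR r s t = (LEAST n. GR_prop r s t n)"

end

theory Submission
  imports Defs
begin

lemma card_edges_of: "finite K \<Longrightarrow> card (edges_of K) = card K choose 2"
  unfolding edges_of_def by (rule n_subsets)

lemma finite_edges_of: "finite K \<Longrightarrow> finite (edges_of K)"
  unfolding edges_of_def by (rule finite_subset[of _ "Pow K"]) auto

lemma two_choose2: "2 * ((k+2) choose 2) = (k+2)*(k+1)"
  by (simp add: choose_two)

lemma turan_base:
  assumes "E \<subseteq> edges_of V" "\<not>(\<exists>S\<subseteq>V. card S = 2 \<and> edges_of S \<subseteq> E)"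
  shows "E = {}"
proof (rule ccontr)
  assume "E \<noteq> {}"
  then obtain e where e: "e \<in> E" by auto
  then have ev: "e \<subseteq> V" "card e = 2" using assms(1) unfolding edges_of_def by auto
  have "edges_of e \<subseteq> E"
  proof
    fix f assume "f \<in> edges_of e"
    then have "f \<subseteq> e" "card f = 2" unfolding edges_of_def by auto
    then have "f = e" using ev card_subset_eq[of e f] card.infinite by fastforce
    then show "f \<in> E" using e by simp
  qed
  then show False using assms(2) ev by blast
qed

lemma turan_step:
  assumes IHk: "\<And>V E. finite V \<Longrightarrow> E \<subseteq> edges_of V \<Longrightarrow>
      \<not>(\<exists>S\<subseteq>V. card S = k+2 \<and> edges_of S \<subseteq> E) \<Longrightarrow> 2*(k+1)*card E \<le> k*(card V)^2"
  shows "finite V \<Longrightarrow> E \<subseteq> edges_of V \<Longrightarrow>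
      \<not>(\<exists>S\<subseteq>V. card S = k+3 \<and> edges_of S \<subseteq> E) \<Longrightarrow> 2*(k+2)*card E \<le> (k+1)*(card V)^2"
proof (induction "card V" arbitrary: V E rule: less_induct)
  case less
  show ?case
  proof (cases "\<exists>S\<subseteq>V. card S = k+2 \<and> edges_of S \<subseteq> E")
    case False
    from IHk[OF less.prems(1,2) False] have h: "2*(k+1)*card E \<le> k*(card V)^2" .
    have "(k+1) * (2*(k+2)*card E) = (k+2) * (2*(k+1)*card E)" by (simp add: algebra_simps)
    also have "\<dots> \<le> (k+2) * (k*(card V)^2)" using h by (rule mult_le_mono2)
    also have "\<dots> \<le> (k+1) * ((k+1)*(card V)^2)"
    proof -
      have "(k+2)*k \<le> (k+1)*(k+1)" by (simp add: algebra_simps)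
      then have "(k+2)*k*(card V)^2 \<le> (k+1)*(k+1)*(card V)^2" by (rule mult_right_mono) simp
      then show ?thesis by (metis mult.assoc)
    qed
    finally have "(k+1) * (2*(k+2)*card E) \<le> (k+1) * ((k+1)*(card V)^2)" .
    then show ?thesis by (subst (asm) mult_le_cancel1) simp
  next
    case True
    then obtain K where K: "K \<subseteq> V" "card K = k+2" "edges_of K \<subseteq> E" by blast
    define W where "W = V - K"
    define E' where "E' = E \<inter> edges_of W"
    have finK: "finite K" using K(1) less.prems(1) finite_subset by blast
    have finW: "finite W" using less.prems(1) W_def by simp
    have cV: "card V = card W + (k+2)"
      using card_Diff_subset[OF finK K(1)] card_mono[OF less.prems(1) K(1)] K(2) W_def by simp
    have E'sub: "E' \<subseteq> edges_of W" using E'_def by simp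
    have E'nc: "\<not>(\<exists>S\<subseteq>W. card S = k+3 \<and> edges_of S \<subseteq> E')"
    proof
      assume "\<exists>S\<subseteq>W. card S = k+3 \<and> edges_of S \<subseteq> E'"
      then obtain S where "S \<subseteq> W" "card S = k+3" "edges_of S \<subseteq> E'" by blast
      then have "S \<subseteq> V" "edges_of S \<subseteq> E" using W_def E'_def by auto
      with \<open>card S = k+3\<close> less.prems(3) show False by blast
    qed
    have IH: "2*(k+2)*card E' \<le> (k+1)*(card W)^2"
      using less.hyps[of W E', OF _ finW E'sub E'nc] cV by simp
    define N where "N = (\<lambda>v. {w\<in>K. {v,w} \<in> E})"
    define C where "C = (\<Union>v\<in>W. (\<lambda>w. {v,w}) ` N v)"
    have Nle: "card (N v) \<le> k+1" if v: "v \<in> W" for v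
    proof (rule ccontr)
      assume "\<not> card (N v) \<le> k+1"
      then have "card (N v) \<ge> card K" using K(2) by simp
      moreover have "N v \<subseteq> K" using N_def by auto
      ultimately have NK: "N v = K" using card_seteq[OF finK] by blast
      have vK: "v \<notin> K" "v \<in> V" using v W_def by auto
      have "edges_of (insert v K) \<subseteq> E"
      proof
        fix f assume f: "f \<in> edges_of (insert v K)"
        then have fs: "f \<subseteq> insert v K" "card f = 2" unfolding edges_of_def by auto
        show "f \<in> E"
        proof (cases "v \<in> f")
          case False
          then have "f \<subseteq> K" using fs by auto
          then show ?thesis using K(3) fs unfolding edges_of_def by auto
        next
          case True
          obtain a b where ab: "f = {a,b}" "a \<noteq> b" using fs(2) card_2_iff by metis
          show ?thesis
          proof (cases "a = v")
            case True
            then have "b \<in> K" using ab fs(1) by auto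
            then have "b \<in> N v" using NK by simp
            then show ?thesis using ab True N_def by auto
          next
            case False
            then have "b = v" using \<open>v \<in> f\<close> ab by auto
            then have "a \<in> K" using ab fs(1) by auto
            then have "a \<in> N v" using NK by simp
            then show ?thesis using ab \<open>b = v\<close> N_def by (auto simp: insert_commute)
          qed
        qed
      qed
      moreover have "card (insert v K) = k+3" using vK finK K(2) by simp
      moreover have "insert v K \<subseteq> V" using vK K(1) by auto
      ultimately show False using less.prems(3) by blast
    qed
    have cC: "card C \<le> card W * (k+1)"
    proof -
      have "card C \<le> (\<Sum>v\<in>W. card ((\<lambda>w. {v,w}) ` N v))"
        unfolding C_def by (rule card_UN_le[OF finW])
      also have "\<dots> \<le> (\<Sum>v\<in>W. k+1)"
      proof (rule sum_mono)
        fix v assume v: "v \<in> W"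
        have "finite (N v)" using finK N_def by auto
        then show "card ((\<lambda>w. {v,w}) ` N v) \<le> k+1" using card_image_le Nle[OF v] le_trans by blast
      qed
      finally show ?thesis by simp
    qed
    have Esub: "E \<subseteq> edges_of K \<union> C \<union> E'"
    proof
      fix e assume e: "e \<in> E"
      then have es: "e \<subseteq> V" "card e = 2" using less.prems(2) unfolding edges_of_def by auto
      obtain a b where ab: "e = {a,b}" "a \<noteq> b" using es(2) card_2_iff by metis
      have abV: "a \<in> V" "b \<in> V" using ab es by auto
      consider "a \<in> K" "b \<in> K" | "a \<notin> K" "b \<notin> K" | "a \<notin> K" "b \<in> K" | "a \<in> K" "b \<notin> K" by blast
      then show "e \<in> edges_of K \<union> C \<union> E'"
      proof cases
        case 1 then show ?thesis using ab es unfolding edges_of_def by auto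
      next
        case 2 then show ?thesis using ab es e abV unfolding E'_def W_def edges_of_def by auto
      next
        case 3
        then have "b \<in> N a" "a \<in> W" using e ab abV N_def W_def by auto
        then show ?thesis using ab unfolding C_def by blast
      next
        case 4
        then have "a \<in> N b" "b \<in> W" using e ab abV N_def W_def by (auto simp: insert_commute)
        then have "{b,a} \<in> C" unfolding C_def by blast
        then show ?thesis using ab by (auto simp: insert_commute)
      qed
    qed
    have finC: "finite C" unfolding C_def N_def using finW finK by auto
    have finE': "finite E'" using finite_edges_of[OF finW] E'sub finite_subset by blast
    have "card E \<le> card (edges_of K \<union> C \<union> E')"
      by (rule card_mono[OF _ Esub]) (simp add: finite_edges_of[OF finK] finC finE')
    also have "\<dots> \<le> card (edges_of K) + card C + card E'"
      by (meson add_mono card_Un_le le_refl order_trans)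
    finally have cE: "card E \<le> ((k+2) choose 2) + card W * (k+1) + card E'"
      using card_edges_of[OF finK] K(2) cC by simp
    define m where "m = card W"
    define B where "B = (k+2) choose 2"
    have B2: "2*B = (k+2)*(k+1)" using two_choose2 B_def by simp
    have "2*(k+2)*card E \<le> 2*(k+2)*(B + m*(k+1) + card E')"
      using cE unfolding B_def m_def by (rule mult_le_mono2)
    also have "\<dots> = (k+2)*(2*B) + 2*(k+2)*(k+1)*m + 2*(k+2)*card E'"
      by (simp add: algebra_simps)
    also have "\<dots> \<le> (k+2)*(2*B) + 2*(k+2)*(k+1)*m + (k+1)*m^2"
      using IH m_def by simp
    also have "\<dots> = (k+1)*(m + (k+2))^2"
      unfolding B2 by (simp add: algebra_simps power2_eq_square)
    finally show ?thesis using cV m_def by simp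
  qed
qed

lemma turan:
  "finite V \<Longrightarrow> E \<subseteq> edges_of V \<Longrightarrow>
      \<not>(\<exists>S\<subseteq>V. card S = k+2 \<and> edges_of S \<subseteq> E) \<Longrightarrow> 2*(k+1)*card E \<le> k*(card V)^2"
proof (induction k arbitrary: V E)
  case 0
  then show ?case using turan_base[of E V] by simp
next
  case (Suc k)
  show ?case using turan_step[of k V E] Suc by (simp add: add.commute)
qed


definition L :: "nat \<Rightarrow> nat \<Rightarrow> nat" where
  "L i x = (if i = 0 then x div 3 else if i = 1 then x mod 3
     else if i = 2 then (x div 3 + x mod 3) mod 3 else (x div 3 + 2 * (x mod 3)) mod 3)"

definition col :: "nat set \<Rightarrow> nat" where
  "col e = (if \<forall>x\<in>e. \<forall>y\<in>e. L 0 x = L 0 y then 0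
     else if \<forall>x\<in>e. \<forall>y\<in>e. L 1 x = L 1 y then 1
     else if \<forall>x\<in>e. \<forall>y\<in>e. L 2 x = L 2 y then 2 else 3)"

lemma col_lt: "col e < 4"
  unfolding col_def by auto

lemma L_lt: "x < 9 \<Longrightarrow> L i x < 3"
  unfolding L_def by auto

lemma nine_cases: "(x::nat) < 9 \<Longrightarrow> x = 0 \<or> x = 1 \<or> x = 2 \<or> x = 3 \<or> x = 4 \<or> x = 5 \<or> x = 6 \<or> x = 7 \<or> x = 8"
  by presburger

lemma four_cases: "(i::nat) < 4 \<Longrightarrow> i = 0 \<or> i = 1 \<or> i = 2 \<or> i = 3"
  by presburger

lemma excl: "x < 9 \<Longrightarrow> y < 9 \<Longrightarrow> x \<noteq> y \<Longrightarrow> L i x = L i y \<Longrightarrow> L j x = L j y \<Longrightarrow> i < j \<Longrightarrow> j < 4 \<Longrightarrow> False"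
  apply (drule nine_cases, drule nine_cases)
  apply (subgoal_tac "i = 0 \<and> j = 1 \<or> i = 0 \<and> j = 2 \<or> i = 0 \<and> j = 3 \<or> i = 1 \<and> j = 2 \<or> i = 1 \<and> j = 3 \<or> i = 2 \<and> j = 3")
   apply (elim disjE conjE; simp add: L_def)
  apply presburger
  done

lemma col_pair:
  assumes "x < 9" "y < 9" "x \<noteq> y" "i < 4" "L i x = L i y"
  shows "col {x,y} = i"
proof -
  have ne: "L j x \<noteq> L j y" if "j < 4" "j \<noteq> i" for j
  proof
    assume "L j x = L j y"
    show False
    proof (cases "j < i")
      case True then show False using excl[of x y j i] assms that \<open>L j x = L j y\<close> by simp
    next
      case False then show False using excl[of x y i j] assms that \<open>L j x = L j y\<close> by simp
    qed
  qed
  show ?thesis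
    using four_cases[OF assms(4)] ne[of 0] ne[of 1] ne[of 2] assms(5)
    by (auto simp: col_def)
qed
lemma lower_nine:
  assumes S: "S \<subseteq> {..<9}" "card S = 4"
  shows "card (col ` edges_of S) > 3"
proof -
  have finS: "finite S" using S(1) finite_subset by blast
  have "{..<4} \<subseteq> col ` edges_of S"
  proof
    fix i assume "i \<in> {..<(4::nat)}"
    then have i: "i < 4" by simp
    have "L i ` S \<subseteq> {..<3}" using L_lt S(1) by auto
    then have "card (L i ` S) \<le> 3" using card_mono[OF finite_lessThan, of "L i ` S" 3] by simp
    then have "\<not> inj_on (L i) S" using S(2) card_image[of "L i" S] by auto
    then obtain x y where xy: "x \<in> S" "y \<in> S" "x \<noteq> y" "L i x = L i y"
      unfolding inj_on_def by blast
    have "{x,y} \<in> edges_of S" using xy unfolding edges_of_def by auto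
    moreover have "col {x,y} = i" using col_pair[of x y i] xy S(1) i by auto
    ultimately show "i \<in> col ` edges_of S" by force
  qed
  moreover have "finite (col ` edges_of S)" using finite_edges_of[OF finS] by simp
  ultimately have "card {..<(4::nat)} \<le> card (col ` edges_of S)" by (rule card_mono[rotated])
  then show ?thesis by simp
qed

lemma not_GR: "n < 10 \<Longrightarrow> \<not> GR_prop 4 4 3 n"
proof
  assume n: "n < 10" and G: "GR_prop 4 4 3 n"
  have "edge_colouring 4 n col" unfolding edge_colouring_def using col_lt by auto
  then obtain S where S: "S \<subseteq> {..<n}" "card S = 4" "card (col ` edges_of S) \<le> 3"
    using G unfolding GR_prop_def by blast
  have "S \<subseteq> {..<9}" using S(1) n by auto
  then show False using lower_nine[of S] S(2,3) by simp
qed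

lemma edges_mono: "S \<subseteq> T \<Longrightarrow> edges_of S \<subseteq> edges_of T"
  unfolding edges_of_def by auto

lemma GR_ten: "GR_prop 4 4 3 10"
  unfolding GR_prop_def
proof (intro allI impI, rule ccontr)
  fix c assume c: "edge_colouring 4 10 c"
    and no: "\<not> (\<exists>S. S \<subseteq> {..<10} \<and> card S = 4 \<and> card (c ` edges_of S) \<le> 3)"
  define A where "A = edges_of {..<(10::nat)}"
  have finA: "finite A" unfolding A_def by (rule finite_edges_of) simp
  have cA: "card A = 45" unfolding A_def by (simp add: card_edges_of choose_two)
  define F where "F = (\<lambda>i. {e\<in>A. c e = i})"
  define G where "G = (\<lambda>i. {e\<in>A. c e \<noteq> i})"
  have F12: "card (F i) \<ge> 12" if i: "i < 4" for i
  proof -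
    have nc: "\<not>(\<exists>S\<subseteq>{..<10}. card S = 2+2 \<and> edges_of S \<subseteq> G i)"
    proof
      assume "\<exists>S\<subseteq>{..<10}. card S = 2+2 \<and> edges_of S \<subseteq> G i"
      then obtain S where S: "S \<subseteq> {..<10}" "card S = 4" "edges_of S \<subseteq> G i" by auto
      have "c ` edges_of S \<subseteq> {..<4} - {i}"
      proof
        fix x assume "x \<in> c ` edges_of S"
        then obtain e where e: "e \<in> edges_of S" "x = c e" by blast
        then have "e \<in> A" "c e \<noteq> i" using S(3) G_def by auto
        then show "x \<in> {..<4} - {i}" using c e(2) unfolding edge_colouring_def A_def by auto
      qed
      then have "card (c ` edges_of S) \<le> card ({..<4} - {i})" by (rule card_mono[rotated]) simp
      also have "\<dots> = 3" using i by simp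
      finally show False using no S by blast
    qed
    have "2*(2+1)*card (G i) \<le> 2*(card {..<(10::nat)})^2"
      by (rule turan[OF _ _ nc]) (auto simp: G_def A_def)
    then have "card (G i) \<le> 33" by simp
    moreover have "card (F i) + card (G i) = 45"
    proof -
      have "F i \<union> G i = A" "F i \<inter> G i = {}" unfolding F_def G_def by auto
      then show ?thesis using card_Un_disjoint[of "F i" "G i"] finA cA
        by (metis finite_Un)
    qed
    ultimately show ?thesis by simp
  qed
  have "(\<Sum>i<4. card (F i)) = card (\<Union>i<4. F i)"
    by (rule card_UN_disjoint[symmetric]) (auto simp: F_def intro: finite_subset[OF _ finA])
  also have "\<dots> \<le> card A" by (rule card_mono[OF finA]) (auto simp: F_def)
  finally have "(\<Sum>i<4. card (F i)) \<le> 45" using cA by simp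
  moreover have "(\<Sum>i<(4::nat). (12::nat)) \<le> (\<Sum>i<4. card (F i))"
    by (rule sum_mono) (simp add: F12)
  ultimately show False by simp
qed

theorem mainTheorem10:
  shows "GR 4 4 3 = 10"
  unfolding GR_def
proof (rule Least_equality)
  show "GR_prop 4 4 3 10" by (rule GR_ten)
next
  fix m assume "GR_prop 4 4 3 m"
  then show "10 \<le> m" using not_GR not_le by blast
qed

end
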